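(* Let $f\colon\mathbb R\to\mathbb R$ be continuous with $|f(x)|\leqslant a\cosh(bx)$ for all $x$, for some $a>0$, $b\in\mathbb R$. Fix $\lambda>0$. Let $\rho$ be a compactly supported Borel probability measure on $\mathbb R$, let $d>0$ be such that $\operatorname{supp}\rho\subset[-d,d]$, and for $n\geqslant1$ let $I^\rho_n=[-nd,nd]$. Then for every $\epsilon>0$ and every integer $n_0>0$ there exists a real trigonometric polynomial $p$ such that $\sup_{x\in I^\rho_{n_0}}|f(x)-p(x)|<\epsilon$, $\sup_{x\in\mathbb R}|p(x)|<\sup_{x\in I^\rho_{n_0}}|f(x)|+\epsilon$, and, for every $x\in\operatorname{supp}\rho$, $$\sum_{n=0}^{n_0-1}\frac{e^{-\lambda}\lambda^n}{(n+1)!}\langle\delta_x*\rho^{*n},|f-p|\rangle<\epsilon\quad\text{and}\quad\sum_{n=0}^{n_0-1}\frac{e^{-\lambda}\lambda^n}{(n+1)!}\langle\rho^{*(n+1)},|f-p|\rangle<\epsilon.$$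
   Context: A trigonometric polynomial of order $n$ and period $T>0$ is a function $p(x)=\sum_{k=-n}^n c_ke^{2\pi ikx/T}$ with $c_k\in\mathbb C$; it is real if $p(x)\in\mathbb R$ for all real $x$. $\langle\tau,\phi\rangle=\int\phi\,d\tau$; $*$ is convolution of measures, $\rho^{*0}=\delta_0$; $\delta_a$ is the Dirac measure at $a$. *)

theory Defs
  imports "HOL-Probability.Probability" "HOL-Probability.Convolution"
begin

definition measure_support :: "real measure \<Rightarrow> real set" where
  "measure_support M = {x. \<forall>U. open U \<and> x \<in> U \<longrightarrow> emeasure M U > 0}"

fun conv_pow :: "real measure \<Rightarrow> nat \<Rightarrow> real measure" where
  "conv_pow M 0 = return borel 0"
| "conv_pow M (Suc n) = convolution M (conv_pow M n)"

definition real_trig_poly :: "(real \<Rightarrow> real) \<Rightarrow> bool" where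
  "real_trig_poly p \<longleftrightarrow> (\<exists>T>0. \<exists>n::nat. \<exists>c::int \<Rightarrow> complex.
     \<forall>x. complex_of_real (p x) =
        (\<Sum>k\<in>{-int n..int n}. c k * exp (2 * of_real pi * \<i> * of_int k * of_real x / of_real T)))"

end

theory Submission
  imports Defs
begin

definition EE :: "real \<Rightarrow> int \<Rightarrow> real \<Rightarrow> complex" where
  "EE T k x = exp (2 * of_real pi * \<i> * of_int k * of_real x / of_real T)"
lemma EE_mult: "EE T k x * EE T j x = EE T (k + j) x"
proof -
  have "2 * of_real pi * \<i> * of_int k * of_real x / of_real T + 2 * of_real pi * \<i> * of_int j * of_real x / of_real T
     = (2 * of_real pi * \<i> * of_int (k+j) * of_real x / of_real T :: complex)"
    by (simp add: distrib_left distrib_right add_divide_distrib)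
  then show ?thesis unfolding EE_def by (metis exp_add)
qed
definition tsm :: "real \<Rightarrow> (real \<Rightarrow> complex) \<Rightarrow> bool" where
  "tsm T p \<longleftrightarrow> (\<exists>K c. finite K \<and> (\<forall>x. p x = (\<Sum>k\<in>K. c k * EE T k x)))"

lemma EE_0: "EE T 0 x = 1" unfolding EE_def by simp

lemma tsm_const: "tsm T (\<lambda>x. c)"
  unfolding tsm_def by (rule exI[of _ "{0}"], rule exI[of _ "\<lambda>_. c"]) (simp add: EE_0)

lemma tsm_add:
  assumes "tsm T p" "tsm T q" shows "tsm T (\<lambda>x. p x + q x)"
proof -
  obtain K c where K: "finite K" "\<And>x. p x = (\<Sum>k\<in>K. c k * EE T k x)" using assms(1) unfolding tsm_def by auto
  obtain J e where J: "finite J" "\<And>x. q x = (\<Sum>k\<in>J. e k * EE T k x)" using assms(2) unfolding tsm_def by auto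
  define c' where "c' k = (if k \<in> K then c k else 0)" for k
  define e' where "e' k = (if k \<in> J then e k else 0)" for k
  have "p x + q x = (\<Sum>k\<in>K \<union> J. (c' k + e' k) * EE T k x)" for x
  proof -
    have 1: "(\<Sum>k\<in>K \<union> J. c' k * EE T k x) = (\<Sum>k\<in>K. c' k * EE T k x)"
      by (rule sum.mono_neutral_right) (auto simp: K J c'_def)
    have 2: "(\<Sum>k\<in>K \<union> J. e' k * EE T k x) = (\<Sum>k\<in>J. e' k * EE T k x)"
      by (rule sum.mono_neutral_right) (auto simp: K J e'_def)
    have 3: "(\<Sum>k\<in>K. c' k * EE T k x) = p x" unfolding K(2) c'_def by (rule sum.cong) auto
    have 4: "(\<Sum>k\<in>J. e' k * EE T k x) = q x" unfolding J(2) e'_def by (rule sum.cong) auto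
    show ?thesis using 1 2 3 4 by (simp add: distrib_right sum.distrib)
  qed
  then show ?thesis unfolding tsm_def using K J by (intro exI[of _ "K \<union> J"] exI[of _ "\<lambda>k. c' k + e' k"]) auto
qed
lemma tsm_mult:
  assumes "tsm T p" "tsm T q" shows "tsm T (\<lambda>x. p x * q x)"
proof -
  obtain K c where K: "finite K" "\<And>x. p x = (\<Sum>k\<in>K. c k * EE T k x)" using assms(1) unfolding tsm_def by auto
  obtain J e where J: "finite J" "\<And>x. q x = (\<Sum>k\<in>J. e k * EE T k x)" using assms(2) unfolding tsm_def by auto
  define g where "g = (\<lambda>z::int\<times>int. fst z + snd z)"
  define C where "C l = (\<Sum>z\<in>{z \<in> K \<times> J. g z = l}. c (fst z) * e (snd z))" for l
  have "p x * q x = (\<Sum>l\<in>g ` (K \<times> J). C l * EE T l x)" for x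
  proof -
    have "p x * q x = (\<Sum>k\<in>K. \<Sum>j\<in>J. (c k * EE T k x) * (e j * EE T j x))"
      unfolding K(2) J(2) by (rule sum_product)
    also have "\<dots> = (\<Sum>z\<in>K \<times> J. (c (fst z) * EE T (fst z) x) * (e (snd z) * EE T (snd z) x))"
      by (subst sum.cartesian_product) (simp add: case_prod_beta)
    also have "\<dots> = (\<Sum>z\<in>K \<times> J. c (fst z) * e (snd z) * EE T (g z) x)"
    proof (rule sum.cong[OF refl])
      fix z :: "int \<times> int"
      have "(c (fst z) * EE T (fst z) x) * (e (snd z) * EE T (snd z) x) = c (fst z) * e (snd z) * (EE T (fst z) x * EE T (snd z) x)"
        by (simp only: ac_simps)
      then show "(c (fst z) * EE T (fst z) x) * (e (snd z) * EE T (snd z) x) = c (fst z) * e (snd z) * EE T (g z) x"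
        by (simp only: EE_mult g_def)
    qed
    also have "\<dots> = (\<Sum>l\<in>g ` (K \<times> J). \<Sum>z\<in>{z \<in> K \<times> J. g z = l}. c (fst z) * e (snd z) * EE T (g z) x)"
      by (rule sum.image_gen) (simp add: K J)
    also have "\<dots> = (\<Sum>l\<in>g ` (K \<times> J). C l * EE T l x)"
      unfolding C_def sum_distrib_right by (intro sum.cong refl) auto
    finally show ?thesis .
  qed
  then show ?thesis unfolding tsm_def using K J by (intro exI[of _ "g ` (K \<times> J)"] exI[of _ C]) auto
qed

lemma tsm_sin:
  assumes "T \<noteq> 0"
  shows "tsm T (\<lambda>x. complex_of_real (sin (2 * pi * x / T)))"
proof -
  have "complex_of_real (sin (2 * pi * x / T)) = (\<Sum>k\<in>{1,-1}. (if k = 1 then 1 / (2*\<i>) else - 1 / (2*\<i>)) * EE T k x)" for x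
  proof -
    have a: "complex_of_real (sin (2 * pi * x / T)) = sin (2 * of_real pi * of_real x / of_real T)"
      by (simp add: sin_of_real[symmetric])
    have b: "EE T 1 x = exp (\<i> * (2 * of_real pi * of_real x / of_real T))" unfolding EE_def
      by (simp add: ac_simps)
    have c: "EE T (-1) x = exp (- (\<i> * (2 * of_real pi * of_real x / of_real T)))" unfolding EE_def
      by (simp add: ac_simps)
    show ?thesis unfolding a sin_exp_eq by (simp add: b c diff_divide_distrib algebra_simps)
  qed
  then show ?thesis unfolding tsm_def
    by (intro exI[of _ "{1,-1}"] exI[of _ "\<lambda>k. if k = 1 then 1 / (2*\<i>) else - 1 / (2*\<i>)"]) simp
qed

lemma tsm_poly:
  assumes "real_polynomial_function g" "T \<noteq> 0"
  shows "tsm T (\<lambda>x. complex_of_real (g (sin (2 * pi * x / T))))"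
  using assms(1)
proof (induction g)
  case (linear h)
  then obtain c where "h = (\<lambda>x. x * c)" by (auto simp: real_bounded_linear)
  then show ?case using tsm_mult[OF tsm_sin[OF assms(2)] tsm_const[of T "complex_of_real c"]] by simp
next
  case (const c) then show ?case by (rule tsm_const)
next
  case (add f g) then show ?case using tsm_add by simp
next
  case (mult f g) then show ?case using tsm_mult by simp
qed

lemma tsm_real_trig:
  assumes "T > 0" "tsm T (\<lambda>x. complex_of_real (p x))"
  shows "real_trig_poly p"
proof -
  obtain K c where K: "finite K" "\<And>x. complex_of_real (p x) = (\<Sum>k\<in>K. c k * EE T k x)"
    using assms(2) unfolding tsm_def by auto
  define n where "n = nat (\<Sum>k\<in>K. \<bar>k\<bar>)"
  have Ksub: "K \<subseteq> {-int n..int n}"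
  proof
    fix k assume k: "k \<in> K"
    have "\<bar>k\<bar> \<le> (\<Sum>k\<in>K. \<bar>k\<bar>)" using member_le_sum[OF k, of abs] K(1) by simp
    then show "k \<in> {-int n..int n}" unfolding n_def by auto
  qed
  define c' where "c' k = (if k \<in> K then c k else 0)" for k
  have "complex_of_real (p x) = (\<Sum>k\<in>{-int n..int n}. c' k * EE T k x)" for x
  proof -
    have "(\<Sum>k\<in>{-int n..int n}. c' k * EE T k x) = (\<Sum>k\<in>K. c' k * EE T k x)"
      by (rule sum.mono_neutral_right) (use Ksub in \<open>auto simp: c'_def\<close>)
    also have "\<dots> = complex_of_real (p x)" unfolding K(2) c'_def by (rule sum.cong) auto
    finally show ?thesis by simp
  qed
  then show ?thesis unfolding real_trig_poly_def EE_def using assms(1)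
    by (intro exI[of _ T] conjI exI[of _ n] exI[of _ c']) auto
qed
lemma AE_conv:
  fixes M N :: "real measure"
  assumes pM: "prob_space M" and pN: "prob_space N"
    and sM: "sets M = sets borel" and sN: "sets N = sets borel"
    and aM: "AE x in M. \<bar>x\<bar> \<le> r" and aN: "AE y in N. \<bar>y\<bar> \<le> s"
  shows "AE z in convolution M N. \<bar>z\<bar> \<le> r + s"
    and "prob_space (convolution M N)"
proof -
  interpret M: prob_space M by fact
  interpret N: prob_space N by fact
  interpret P: pair_sigma_finite M N ..
  have meas: "(\<lambda>(x,y). x + y) \<in> measurable (M \<Otimes>\<^sub>M N) (borel :: real measure)"
    using sM sN by (simp add: measurable_cong_sets[OF sets_pair_measure_cong[OF sM sN] refl])
  show "AE z in convolution M N. \<bar>z\<bar> \<le> r + s"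
    unfolding convolution_def
  proof (subst AE_distr_iff[OF meas])
    show "{x \<in> space borel. \<bar>x\<bar> \<le> r + s} \<in> sets (borel::real measure)" by measurable
    show "AE x in M \<Otimes>\<^sub>M N. \<bar>case x of (x, y) \<Rightarrow> x + y\<bar> \<le> r + s"
    proof (rule P.AE_pair_measure)
      have "{x \<in> space (M \<Otimes>\<^sub>M N). \<bar>case x of (x, y) \<Rightarrow> x + y\<bar> \<le> r + s} = 
            (\<lambda>(x,y). x + y) -` {z. \<bar>z\<bar> \<le> r + s} \<inter> space (M \<Otimes>\<^sub>M N)" by auto
      also have "\<dots> \<in> sets (M \<Otimes>\<^sub>M N)"
        by (rule measurable_sets[OF meas]) measurable
      finally show "{x \<in> space (M \<Otimes>\<^sub>M N). \<bar>case x of (x, y) \<Rightarrow> x + y\<bar> \<le> r + s} \<in> sets (M \<Otimes>\<^sub>M N)" .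
      show "AE x in M. AE y in N. \<bar>case (x, y) of (x, y) \<Rightarrow> x + y\<bar> \<le> r + s"
        using aM by eventually_elim (use aN in \<open>eventually_elim, simp add: abs_triangle_ineq order_trans[OF abs_triangle_ineq]\<close>)
    qed
  qed
  show "prob_space (convolution M N)"
    unfolding convolution_def
    by (rule prob_space.prob_space_distr[OF prob_space_pair[OF pM pN] meas])
qed

lemma conv_pow_props:
  assumes pr: "prob_space \<rho>" and sr: "sets \<rho> = sets borel" and ar: "AE x in \<rho>. \<bar>x\<bar> \<le> d"
  shows "prob_space (conv_pow \<rho> n) \<and> sets (conv_pow \<rho> n) = sets borel \<and> (AE y in conv_pow \<rho> n. \<bar>y\<bar> \<le> real n * d)"
proof (induction n)
  case 0
  have "AE y in return borel (0::real). y = 0" by (subst AE_return) auto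
  then have "AE y in conv_pow \<rho> 0. y = 0" by (subst conv_pow.simps(1))
  then show ?case by (simp add: prob_space_return)
next
  case (Suc n)
  then show ?case using AE_conv[OF pr _ sr _ ar, of "conv_pow \<rho> n" "real n * d"]
    unfolding conv_pow.simps(2) by (auto simp: algebra_simps)
qed

lemma supp_AE:
  assumes sr: "sets \<rho> = sets (borel :: real measure)" and supp: "measure_support \<rho> \<subseteq> {-d..d}"
  shows "AE x in \<rho>. \<bar>x\<bar> \<le> d"
proof -
  define F where "F = {U :: real set. open U \<and> emeasure \<rho> U = 0}"
  obtain F' where F': "F' \<subseteq> F" "countable F'" "\<Union>F' = \<Union>F"
    using Lindelof[of F] unfolding F_def by blast
  have sub: "{x \<in> space \<rho>. \<not> \<bar>x\<bar> \<le> d} \<subseteq> (\<Union>U\<in>F'. U)"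
  proof
    fix x assume x: "x \<in> {x \<in> space \<rho>. \<not> \<bar>x\<bar> \<le> d}"
    then have "x \<notin> measure_support \<rho>" using supp by (auto simp: abs_le_iff)
    then obtain U where "open U" "x \<in> U" "\<not> emeasure \<rho> U > 0" unfolding measure_support_def by blast
    then have "U \<in> F" unfolding F_def by (simp add: zero_less_iff_neq_zero)
    then show "x \<in> (\<Union>U\<in>F'. U)" using F'(3) \<open>x \<in> U\<close> by auto
  qed
  have "(\<Union>U\<in>F'. U) \<in> null_sets \<rho>"
  proof (rule null_sets_UN'[OF F'(2)])
    fix U assume "U \<in> F'"
    then have "open U" "emeasure \<rho> U = 0" using F'(1) unfolding F_def by auto
    then show "U \<in> null_sets \<rho>" using sr by (simp add: null_sets_def)
  qed
  then show ?thesis using sub by (rule AE_I')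
qed


lemma sum_bound:
  fixes a :: "nat \<Rightarrow> real" and J :: "nat \<Rightarrow> ennreal"
  assumes "\<And>n. n < n0 \<Longrightarrow> J n \<le> ennreal \<delta>" "\<delta> \<ge> 0" "\<And>n. a n \<ge> 0"
    and "(\<Sum>n<n0. a n) * \<delta> < \<epsilon>"
  shows "(\<Sum>n<n0. ennreal (a n) * J n) < ennreal \<epsilon>"
proof -
  have "(\<Sum>n<n0. ennreal (a n) * J n) \<le> (\<Sum>n<n0. ennreal (a n) * ennreal \<delta>)"
    by (intro sum_mono mult_left_mono) (auto simp: assms)
  also have "\<dots> = (\<Sum>n<n0. ennreal (a n * \<delta>))" using assms by (simp add: ennreal_mult)
  also have "\<dots> = ennreal ((\<Sum>n<n0. a n) * \<delta>)" using assms by (simp add: sum_distrib_right)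
  also have "\<dots> < ennreal \<epsilon>" using assms(4) assms(2,3) by (subst ennreal_less_iff) (auto intro!: mult_nonneg_nonneg sum_nonneg)
  finally show ?thesis .
qed

lemma intg_bound:
  fixes \<mu> :: "real measure" and F :: "real \<Rightarrow> real"
  assumes "prob_space \<mu>" "AE y in \<mu>. \<bar>y\<bar> \<le> L" "\<And>y. \<bar>y\<bar> \<le> L \<Longrightarrow> F y < \<delta>"
  shows "(\<integral>\<^sup>+ y. ennreal (F y) \<partial>\<mu>) \<le> ennreal \<delta>"
proof -
  have "(\<integral>\<^sup>+ y. ennreal (F y) \<partial>\<mu>) \<le> (\<integral>\<^sup>+ y. ennreal \<delta> \<partial>\<mu>)"
    by (rule nn_integral_mono_AE) (use assms(2) in \<open>eventually_elim, use assms(3) in \<open>auto intro: ennreal_leI less_imp_le\<close>\<close>)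
  also have "\<dots> = ennreal \<delta>" using prob_space.emeasure_space_1[OF assms(1)] by simp
  finally show ?thesis .
qed

theorem lemma3:
  fixes f :: "real \<Rightarrow> real" and a b lam d :: real and \<rho> :: "real measure"
  assumes f_cont: "continuous_on UNIV f"
    and a_pos: "a > 0"
    and f_bound: "\<And>x. \<bar>f x\<bar> \<le> a * cosh (b * x)"
    and lam_pos: "lam > 0"
    and rho_prob: "prob_space \<rho>"
    and rho_borel: "sets \<rho> = sets borel"
    and d_pos: "d > 0"
    and supp: "measure_support \<rho> \<subseteq> {-d..d}"
  shows "\<forall>\<epsilon>>0. \<forall>n0::nat. n0 > 0 \<longrightarrow>
    (\<exists>p. real_trig_poly p
      \<and> (SUP x\<in>{-(real n0 * d)..real n0 * d}. \<bar>f x - p x\<bar>) < \<epsilon>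
      \<and> (SUP x\<in>UNIV. \<bar>p x\<bar>) < (SUP x\<in>{-(real n0 * d)..real n0 * d}. \<bar>f x\<bar>) + \<epsilon>
      \<and> (\<forall>x\<in>measure_support \<rho>.
           (\<Sum>n<n0. ennreal (exp (-lam) * lam ^ n / fact (n + 1)) *
              (\<integral>\<^sup>+ y. ennreal \<bar>f y - p y\<bar> \<partial>(convolution (return borel x) (conv_pow \<rho> n)))) < ennreal \<epsilon>
         \<and> (\<Sum>n<n0. ennreal (exp (-lam) * lam ^ n / fact (n + 1)) *
              (\<integral>\<^sup>+ y. ennreal \<bar>f y - p y\<bar> \<partial>(conv_pow \<rho> (Suc n)))) < ennreal \<epsilon>))"
proof (intro allI impI)
  fix \<epsilon> :: real and n0 :: nat
  assume eps: "\<epsilon> > 0" and n0: "n0 > 0"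
  define L where "L = real n0 * d"
  have L: "L > 0" using n0 d_pos by (simp add: L_def)
  define M where "M = (SUP x\<in>{-L..L}. \<bar>f x\<bar>)"
  have "compact ((\<lambda>x. \<bar>f x\<bar>) ` {-L..L})"
    by (intro compact_continuous_image continuous_on_rabs continuous_on_subset[OF f_cont]) auto
  then have bdd: "bdd_above ((\<lambda>x. \<bar>f x\<bar>) ` {-L..L})"
    by (intro bounded_imp_bdd_above compact_imp_bounded)
  have fM: "\<bar>f x\<bar> \<le> M" if "x \<in> {-L..L}" for x
    unfolding M_def using bdd that by (rule cSUP_upper2) auto
  define c where "c = pi / (2 * L)"
  have c: "c > 0" using L by (simp add: c_def)
  define h where "h u = f (arcsin u / c)" for u
  have "continuous_on {-1..1} (\<lambda>u. arcsin u / c)"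
    using c by (intro continuous_intros) auto
  then have hc: "continuous_on {-1..1} h"
    unfolding h_def by (rule continuous_on_compose2[OF f_cont]) auto
  define a where "a n = exp (-lam) * lam ^ n / fact (n + 1)" for n :: nat
  have a_nn: "a n \<ge> 0" for n using lam_pos by (simp add: a_def)
  define S where "S = (\<Sum>n<n0. a n)"
  have S: "S \<ge> 0" unfolding S_def using a_nn by (simp add: sum_nonneg)
  define \<delta> where "\<delta> = \<epsilon> / (S + 2)"
  have Se: "S * \<epsilon> \<ge> 0" using S eps by simp
  have d1: "\<delta> > 0" unfolding \<delta>_def using S eps by simp
  have d2: "\<delta> < \<epsilon>" unfolding \<delta>_def using S eps Se by (simp add: divide_less_eq algebra_simps add_pos_nonneg)
  have d3: "S * \<delta> < \<epsilon>" unfolding \<delta>_def using S eps Se by (simp add: divide_less_eq algebra_simps add_pos_nonneg)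
  note \<delta> = d1 d2 d3
  obtain g where g: "real_polynomial_function g" "\<And>u. u \<in> {-1..1} \<Longrightarrow> \<bar>h u - g u\<bar> < \<delta>"
    using Stone_Weierstrass_real_polynomial_function[OF compact_Icc hc \<delta>(1)] by blast
  define p where "p x = g (sin (c * x))" for x
  have "p = (\<lambda>x. g (sin (2 * pi * x / (4 * L))))"
  proof
    fix x have "c * x = 2 * pi * x / (4 * L)" using L by (simp add: c_def field_simps)
    then show "p x = g (sin (2 * pi * x / (4 * L)))" by (simp add: p_def)
  qed
  then have trig: "real_trig_poly p"
    using tsm_real_trig[of "4 * L" p] tsm_poly[OF g(1), of "4 * L"] L by simp
  have sin_rng: "sin (c * x) \<in> {-1..1}" for x by auto
  have pI: "\<bar>f x - p x\<bar> < \<delta>" if "\<bar>x\<bar> \<le> L" for x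
  proof -
    have cL: "c * L = pi / 2" using L by (simp add: c_def)
    have x: "-L \<le> x" "x \<le> L" using that by (auto simp: abs_le_iff)
    have "c * (-L) \<le> c * x" "c * x \<le> c * L"
      using x c by (intro mult_left_mono; simp)+
    then have "- (pi/2) \<le> c * x" "c * x \<le> pi/2" using cL by auto
    then have "arcsin (sin (c * x)) = c * x" by (rule arcsin_sin)
    then have "h (sin (c * x)) = f x" using c by (simp add: h_def)
    then show ?thesis using g(2)[OF sin_rng[of x]] by (simp add: p_def)
  qed
  have pall: "\<bar>p x\<bar> \<le> M + \<delta>" for x
  proof -
    define u where "u = sin (c * x)"
    have u: "-1 \<le> u" "u \<le> 1" unfolding u_def by auto
    have "\<bar>arcsin u\<bar> \<le> pi / 2" using arcsin_bounded[OF u] by auto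
    have e: "arcsin u / c = arcsin u * (2*L/pi)" by (simp add: c_def)
    have "\<bar>arcsin u * (2*L/pi)\<bar> = \<bar>arcsin u\<bar> * (2*L/pi)" using L by (simp add: abs_mult)
    also have "\<dots> \<le> (pi/2) * (2*L/pi)" using \<open>\<bar>arcsin u\<bar> \<le> pi / 2\<close> L by (intro mult_right_mono) auto
    also have "\<dots> = L" by simp
    finally have "\<bar>arcsin u / c\<bar> \<le> L" unfolding e .
    then have "arcsin u / c \<in> {-L..L}" using abs_le_D1 abs_le_D2 unfolding atLeastAtMost_iff
      by (metis minus_le_iff)
    then have "\<bar>h u\<bar> \<le> M" unfolding h_def by (rule fM)
    moreover have "\<bar>h u - g u\<bar> < \<delta>" using g(2) u by auto
    ultimately show ?thesis unfolding p_def u_def[symmetric] by linarith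
  qed
  have sup1: "(SUP x\<in>{-L..L}. \<bar>f x - p x\<bar>) < \<epsilon>"
  proof -
    have "(SUP x\<in>{-L..L}. \<bar>f x - p x\<bar>) \<le> \<delta>"
    proof (rule cSUP_least)
      show "{-L..L} \<noteq> {}" using L by simp
      fix x assume "x \<in> {-L..L}"
      then have "\<bar>x\<bar> \<le> L" by auto
      then show "\<bar>f x - p x\<bar> \<le> \<delta>" using pI less_imp_le by blast
    qed
    then show ?thesis using \<delta> by linarith
  qed
  have sup2: "(SUP x\<in>UNIV. \<bar>p x\<bar>) < M + \<epsilon>"
  proof -
    have "(SUP x\<in>UNIV. \<bar>p x\<bar>) \<le> M + \<delta>" by (intro cSUP_least) (auto intro: pall)
    then show ?thesis using \<delta> by linarith
  qed
  have ar: "AE x in \<rho>. \<bar>x\<bar> \<le> d" by (rule supp_AE[OF rho_borel supp])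
  note props = conv_pow_props[OF rho_prob rho_borel ar]
  have intg: "(\<integral>\<^sup>+ y. ennreal \<bar>f y - p y\<bar> \<partial>\<mu>) \<le> ennreal \<delta>"
    if "prob_space \<mu>" "AE y in \<mu>. \<bar>y\<bar> \<le> L" for \<mu>
    by (rule intg_bound[OF that]) (rule pI)
  have part: "(\<Sum>n<n0. ennreal (a n) *
              (\<integral>\<^sup>+ y. ennreal \<bar>f y - p y\<bar> \<partial>(convolution (return borel x) (conv_pow \<rho> n)))) < ennreal \<epsilon>
         \<and> (\<Sum>n<n0. ennreal (a n) *
              (\<integral>\<^sup>+ y. ennreal \<bar>f y - p y\<bar> \<partial>(conv_pow \<rho> (Suc n)))) < ennreal \<epsilon>"
    if x: "x \<in> measure_support \<rho>" for x
  proof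
    have xd: "\<bar>x\<bar> \<le> d" using x supp by (auto simp: abs_le_iff)
    have ret: "prob_space (return borel x)" "sets (return borel x) = sets borel"
      by (auto intro: prob_space_return)
    have aer: "AE y in return borel x. \<bar>y\<bar> \<le> \<bar>x\<bar>" by (subst AE_return) auto
    show "(\<Sum>n<n0. ennreal (a n) *
              (\<integral>\<^sup>+ y. ennreal \<bar>f y - p y\<bar> \<partial>(convolution (return borel x) (conv_pow \<rho> n)))) < ennreal \<epsilon>"
    proof (rule sum_bound[OF _ less_imp_le[OF \<delta>(1)] a_nn])
      fix n assume n: "n < n0"
      have pn: "prob_space (conv_pow \<rho> n)" "sets (conv_pow \<rho> n) = sets borel"
          "AE y in conv_pow \<rho> n. \<bar>y\<bar> \<le> real n * d" using props[of n] by auto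
      note cv = AE_conv[OF ret(1) pn(1) ret(2) pn(2) aer pn(3)]
      have "real (Suc n) * d \<le> real n0 * d" using n d_pos by (intro mult_right_mono) auto
      then have nL: "real n * d + d \<le> L" unfolding L_def by (simp add: algebra_simps)
      have "AE y in convolution (return borel x) (conv_pow \<rho> n). \<bar>y\<bar> \<le> L"
        using cv(1) by eventually_elim (use xd nL in linarith)
      then show "(\<integral>\<^sup>+ y. ennreal \<bar>f y - p y\<bar> \<partial>(convolution (return borel x) (conv_pow \<rho> n))) \<le> ennreal \<delta>"
        by (rule intg[OF cv(2)])
    qed (use \<delta> in \<open>simp add: S_def\<close>)
    show "(\<Sum>n<n0. ennreal (a n) *
              (\<integral>\<^sup>+ y. ennreal \<bar>f y - p y\<bar> \<partial>(conv_pow \<rho> (Suc n)))) < ennreal \<epsilon>"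
    proof (rule sum_bound[OF _ less_imp_le[OF \<delta>(1)] a_nn])
      fix n assume n: "n < n0"
      have pn: "prob_space (conv_pow \<rho> (Suc n))"
          "AE y in conv_pow \<rho> (Suc n). \<bar>y\<bar> \<le> real (Suc n) * d" using props[of "Suc n"] by auto
      have "real (Suc n) * d \<le> L" using n d_pos unfolding L_def by (intro mult_right_mono) auto
      then have "AE y in conv_pow \<rho> (Suc n). \<bar>y\<bar> \<le> L"
        using pn(2) by (auto elim: eventually_mono)
      then show "(\<integral>\<^sup>+ y. ennreal \<bar>f y - p y\<bar> \<partial>(conv_pow \<rho> (Suc n))) \<le> ennreal \<delta>"
        by (rule intg[OF pn(1)])
    qed (use \<delta> in \<open>simp add: S_def\<close>)
  qed
  have sup1': "(SUP x\<in>{-(real n0 * d)..real n0 * d}. \<bar>f x - p x\<bar>) < \<epsilon>" using sup1 by (simp only: L_def)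
  have sup2': "(SUP x\<in>UNIV. \<bar>p x\<bar>) < (SUP x\<in>{-(real n0 * d)..real n0 * d}. \<bar>f x\<bar>) + \<epsilon>"
    using sup2 by (simp only: L_def M_def)
  have part': "(\<Sum>n<n0. ennreal (exp (-lam) * lam ^ n / fact (n + 1)) *
              (\<integral>\<^sup>+ y. ennreal \<bar>f y - p y\<bar> \<partial>(convolution (return borel x) (conv_pow \<rho> n)))) < ennreal \<epsilon>
         \<and> (\<Sum>n<n0. ennreal (exp (-lam) * lam ^ n / fact (n + 1)) *
              (\<integral>\<^sup>+ y. ennreal \<bar>f y - p y\<bar> \<partial>(conv_pow \<rho> (Suc n)))) < ennreal \<epsilon>"
    if "x \<in> measure_support \<rho>" for x
    using part[OF that] by (simp only: a_def)
  show "\<exists>p. real_trig_poly p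
      \<and> (SUP x\<in>{-(real n0 * d)..real n0 * d}. \<bar>f x - p x\<bar>) < \<epsilon>
      \<and> (SUP x\<in>UNIV. \<bar>p x\<bar>) < (SUP x\<in>{-(real n0 * d)..real n0 * d}. \<bar>f x\<bar>) + \<epsilon>
      \<and> (\<forall>x\<in>measure_support \<rho>.
           (\<Sum>n<n0. ennreal (exp (-lam) * lam ^ n / fact (n + 1)) *
              (\<integral>\<^sup>+ y. ennreal \<bar>f y - p y\<bar> \<partial>(convolution (return borel x) (conv_pow \<rho> n)))) < ennreal \<epsilon>
         \<and> (\<Sum>n<n0. ennreal (exp (-lam) * lam ^ n / fact (n + 1)) *
              (\<integral>\<^sup>+ y. ennreal \<bar>f y - p y\<bar> \<partial>(conv_pow \<rho> (Suc n)))) < ennreal \<epsilon>)"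
    by (rule exI[of _ p], intro conjI ballI trig sup1' sup2' part')
qed

end
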